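(* Let $G$ be a finite group, $H$ a subgroup of $G$, and $c \in G$ with $c \notin N(H)$, where $N(H) = \{g \in G : gHg^{-1} = H\}$ is the normalizer of $H$. Then \[ |H \cap cHc| \le \frac{|H|}{2}, \] where $cHc = \{chc : h \in H\}$. *)

theory Defs
  imports Complex_Main "HOL-Algebra.Group_Action"
begin

end

theory Submission
  imports Defs
begin

lemma (in group) t: assumes "c \<in> carrier G" "h \<in> carrier G" "h0 \<in> carrier G"
  shows "(c \<otimes> h \<otimes> c) \<otimes> inv (c \<otimes> h0 \<otimes> c) = c \<otimes> (h \<otimes> inv h0) \<otimes> inv c"
proof -
  have cc: "\<And>w. w \<in> carrier G \<Longrightarrow> c \<otimes> (inv c \<otimes> w) = w"
  proof -
    fix w assume w: "w \<in> carrier G"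
    have "c \<otimes> (inv c \<otimes> w) = (c \<otimes> inv c) \<otimes> w" using assms w by (simp only: m_assoc inv_closed)
    also have "\<dots> = w" using assms w by simp
    finally show "c \<otimes> (inv c \<otimes> w) = w" .
  qed
  have "inv (c \<otimes> h0 \<otimes> c) = inv c \<otimes> (inv h0 \<otimes> inv c)"
    using assms by (simp add: inv_mult_group m_assoc)
  then have "(c \<otimes> h \<otimes> c) \<otimes> inv (c \<otimes> h0 \<otimes> c) = (c \<otimes> h) \<otimes> (c \<otimes> inv c) \<otimes> (inv h0 \<otimes> inv c)"
    using assms by (simp add: m_assoc cc)
  also have "\<dots> = c \<otimes> (h \<otimes> inv h0) \<otimes> inv c" using assms by (simp add: m_assoc)
  finally show ?thesis .
qed

theorem lemma2:
  fixes G (structure) and H :: "'a set" and c :: 'a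
  assumes "group G" and "finite (carrier G)" and "subgroup H G"
    and "c \<in> carrier G" and "c \<notin> normalizer G H"
  shows "real (card (H \<inter> {c \<otimes> h \<otimes> c | h. h \<in> H})) \<le> real (card H) / 2"
proof -
  interpret group G by fact
  have HG: "H \<subseteq> carrier G" using assms(3) subgroup.subset by blast
  have fH: "finite H" using HG assms(2) finite_subset by blast
  define K where "K = c <# H #> inv c"
  have Kdef: "K = (\<lambda>h. c \<otimes> h \<otimes> inv c) ` H"
    unfolding K_def l_coset_def r_coset_def by auto
  have Ksub: "subgroup K G"
    using subgroup_conjugation_is_surj1[of "inv c" H] assms(3,4) unfolding K_def by simp
  have cardK: "card K = card H"
    unfolding Kdef
    by (rule card_image, rule inj_onI) (use HG assms(4) conjugation_is_inj in blast)
  have KH: "K \<noteq> H"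
    using assms(5) HG assms(4) unfolding normalizer_def stabilizer_def K_def by auto
  have fK: "finite K" using Ksub subgroup.subset assms(2) finite_subset by blast
  obtain a where a: "a \<in> H" "a \<notin> K"
  proof -
    have "\<not> H \<subseteq> K"
    proof
      assume "H \<subseteq> K"
      then have "H = K" using card_subset_eq[OF fK] cardK by auto
      with KH show False by simp
    qed
    then show ?thesis using that by blast
  qed
  define D where "D = H \<inter> K"
  have fD: "finite D" using fH D_def by simp
  have aG: "a \<in> carrier G" using a HG by blast
  have DG: "D \<subseteq> carrier G" using D_def HG by blast
  have 1: "(\<lambda>d. a \<otimes> d) ` D \<subseteq> H"
    using a(1) D_def assms(3) subgroup.m_closed by fastforce
  have 2: "(\<lambda>d. a \<otimes> d) ` D \<inter> D = {}"
  proof (rule ccontr)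
    assume "(\<lambda>d. a \<otimes> d) ` D \<inter> D \<noteq> {}"
    then obtain d where d: "d \<in> D" "a \<otimes> d \<in> K" unfolding D_def by auto
    have dK: "d \<in> K" "d \<in> carrier G" using d D_def DG by auto
    have "a = (a \<otimes> d) \<otimes> inv d" using aG dK by (simp add: m_assoc)
    also have "\<dots> \<in> K" using d dK Ksub subgroup.m_closed subgroup.m_inv_closed by metis
    finally show False using a by simp
  qed
  have 3: "card ((\<lambda>d. a \<otimes> d) ` D) = card D"
    by (rule card_image, rule inj_onI) (use DG aG in \<open>metis Units_eq Units_l_cancel subsetD\<close>)
  have "card ((\<lambda>d. a \<otimes> d) ` D \<union> D) \<le> card H"
    using 1 D_def fH by (intro card_mono) auto
  then have DH: "2 * card D \<le> card H"
    using card_Un_disjoint[OF _ fD 2] fD 3 by simp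
  define S where "S = H \<inter> {c \<otimes> h \<otimes> c | h. h \<in> H}"
  have "card S \<le> card D"
  proof (cases "S = {}")
    case True then show ?thesis by simp
  next
    case False
    then obtain x where x: "x \<in> S" by blast
    then obtain h0 where h0: "h0 \<in> H" "x = c \<otimes> h0 \<otimes> c" "x \<in> H" unfolding S_def by auto
    have xG: "x \<in> carrier G" using h0 HG by blast
    have h0G: "h0 \<in> carrier G" using h0 HG by blast
    have "(\<lambda>y. y \<otimes> inv x) ` S \<subseteq> D"
    proof
      fix z assume "z \<in> (\<lambda>y. y \<otimes> inv x) ` S"
      then obtain y h where y: "z = y \<otimes> inv x" "y \<in> H" "h \<in> H" "y = c \<otimes> h \<otimes> c"
        unfolding S_def by auto
      have hG: "h \<in> carrier G" using y HG by blast
      have "z \<in> H" using y h0 assms(3) subgroup.m_closed subgroup.m_inv_closed by metis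
      moreover have "z \<in> K"
      proof -
        have e: "z = c \<otimes> (h \<otimes> inv h0) \<otimes> inv c"
          unfolding y(1) y(4) h0(2) by (rule t[OF assms(4) hG h0G])
        have "h \<otimes> inv h0 \<in> H"
          using y(3) h0(1) assms(3) subgroup.m_closed subgroup.m_inv_closed by metis
        then show ?thesis unfolding Kdef e by (rule imageI)
      qed
      ultimately show "z \<in> D" unfolding D_def by blast
    qed
    moreover have "inj_on (\<lambda>y. y \<otimes> inv x) S"
      by (rule inj_onI) (use xG HG S_def right_cancel inv_closed in \<open>blast\<close>)
    ultimately show ?thesis using card_inj_on_le fD by blast
  qed
  then show ?thesis using DH unfolding S_def by simp
qed

end
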